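(* There is an absolute constant $C\ge1$ such that for every $n\ge3$ and every $\vec a=a_1\cdots a_n\in\mathbb N^n$ (writing $X\sim Y$ for $C^{-1}Y\le X\le CY$): (1) $\#\Xi(\mathbf1,\vec a)\sim q_n(\vec a)/a_1$; (2) $\#\Xi(\mathbf2,\vec a)\sim q_n(\vec a)$; (3) $\#\Xi(\mathbf3,\vec a)\sim q_n(\vec a)$ if $a_1\ge2$; (4) $\#\Xi(\mathbf3,\vec a)\sim q_n(\vec a)/a_2$ if $a_1=1$; (5) $\#\Xi(\mathbf t,\vec a,\mathbf2)+\#\Xi(\mathbf t,\vec a,\mathbf3)\sim\#\Xi(\mathbf t,\vec a)$ for every $\mathbf t\in\{\mathbf1,\mathbf2,\mathbf3\}$; (6) $\#\Xi(\mathbf2,\vec a,\mathbf1)\sim q_n(\vec a)$.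
   Context: $q_n(\vec a)$ is defined by $q_{-1}=0$, $q_0=1$, $q_{k+1}=a_{k+1}q_k+q_{k-1}$. For $m\ge1$ let $\mathcal A_m=\{(\mathbf1,k)_m:1\le k\le m+1\}\cup\{(\mathbf2,1)_m\}\cup\{(\mathbf3,k)_m:1\le k\le m\}$, type $\mathbf t_{(\mathbf t,k)_m}=\mathbf t$. For $\mathbf t\in\{\mathbf1,\mathbf2,\mathbf3\}$, $\hat e\in\mathcal A_m$: $\mathbf t\to\hat e$ iff $(\mathbf t,\hat e)$ is $(\mathbf1,(\mathbf2,1)_m)$, $(\mathbf2,(\mathbf1,k)_m)$ with $k\le m+1$, $(\mathbf2,(\mathbf3,k)_m)$ with $k\le m$, $(\mathbf3,(\mathbf1,k)_m)$ with $k\le m$, or $(\mathbf3,(\mathbf3,k)_m)$ with $k\le m-1$; $e\to\hat e$ iff $\mathbf t_e\to\hat e$. $\Xi(\mathbf t,\vec a)$ is the set of words $w_1\cdots w_n\in\prod_{j=1}^n\mathcal A_{a_j}$ with $\mathbf t\to w_1$ and $w_j\to w_{j+1}$ ($1\le j<n$); $\Xi(\mathbf t,\vec a,\mathbf t')=\{w\in\Xi(\mathbf t,\vec a):\mathbf t_{w_n}=\mathbf t'\}$. *)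

theory Defs
  imports Complex_Main
begin

datatype ltype = T1 | T2 | T3

text \<open>A letter (t,k)_m is represented by the pair (t,k); the index m is
  determined by the position in the word.\<close>
type_synonym letter = "ltype \<times> nat"

definition alph :: "nat \<Rightarrow> letter set" where
  "alph m = {(T1,k) | k. 1 \<le> k \<and> k \<le> m + 1} \<union> {(T2,1)} \<union> {(T3,k) | k. 1 \<le> k \<and> k \<le> m}"

fun arrow :: "nat \<Rightarrow> ltype \<Rightarrow> letter \<Rightarrow> bool" where
  "arrow m T1 e = (e = (T2,1))"
| "arrow m T2 e = ((fst e = T1 \<and> snd e \<le> m + 1) \<or> (fst e = T3 \<and> snd e \<le> m))"
| "arrow m T3 e = ((fst e = T1 \<and> snd e \<le> m) \<or> (fst e = T3 \<and> snd e \<le> m - 1))"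

text \<open>Indices shifted: a ! j is a_{j+1}, w ! j is w_{j+1}.\<close>
definition Xi :: "ltype \<Rightarrow> nat list \<Rightarrow> letter list set" where
  "Xi t a = {w. length w = length a \<and> (\<forall>j < length a. w ! j \<in> alph (a ! j))
      \<and> arrow (a ! 0) t (w ! 0)
      \<and> (\<forall>j. j + 1 < length a \<longrightarrow> arrow (a ! (j+1)) (fst (w ! j)) (w ! (j+1)))}"

definition Xi_end :: "ltype \<Rightarrow> nat list \<Rightarrow> ltype \<Rightarrow> letter list set" where
  "Xi_end t a t' = {w \<in> Xi t a. fst (w ! (length a - 1)) = t'}"

text \<open>Continuant: q_{-1}=0, q_0=1, q_{k+1}=a_{k+1} q_k + q_{k-1}; qn a = q_n(a).\<close>
definition qn :: "nat list \<Rightarrow> nat" where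
  "qn a = snd (foldl (\<lambda>(p, q) x. (q, x * q + p)) (0, 1) a)"

definition sim :: "real \<Rightarrow> real \<Rightarrow> real \<Rightarrow> bool" where
  "sim C X Y \<longleftrightarrow> Y / C \<le> X \<and> X \<le> C * Y"

end

theory Submission imports Defs begin

definition S :: "ltype \<Rightarrow> nat \<Rightarrow> letter set" where
  "S t m = {e \<in> alph m. arrow m t e}"

lemma Xi_iff: "w \<in> Xi t a \<longleftrightarrow> length w = length a \<and> (\<forall>j < length a. w ! j \<in> alph (a ! j))
      \<and> arrow (a ! 0) t (w ! 0)
      \<and> (\<forall>j. j + 1 < length a \<longrightarrow> arrow (a ! (j+1)) (fst (w ! j)) (w ! (j+1)))"
  unfolding Xi_def by (rule mem_Collect_eq)

lemma Xi_cons_iff: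
  assumes "r \<noteq> []"
  shows "e#w \<in> Xi t (m#r) \<longleftrightarrow> e \<in> S t m \<and> w \<in> Xi (fst e) r"
proof -
  have A: "(\<forall>j < length (m#r). (e#w) ! j \<in> alph ((m#r) ! j)) \<longleftrightarrow>
        e \<in> alph m \<and> (\<forall>j < length r. w ! j \<in> alph (r ! j))"
  proof
    assume H: "\<forall>j < length (m#r). (e#w) ! j \<in> alph ((m#r) ! j)"
    have "e \<in> alph m" using spec[OF H, of 0] by simp
    moreover have "w ! j \<in> alph (r ! j)" if "j < length r" for j
      using spec[OF H, of "Suc j"] that by simp
    ultimately show "e \<in> alph m \<and> (\<forall>j < length r. w ! j \<in> alph (r ! j))" by blast
  next
    assume H: "e \<in> alph m \<and> (\<forall>j < length r. w ! j \<in> alph (r ! j))"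
    show "\<forall>j < length (m#r). (e#w) ! j \<in> alph ((m#r) ! j)"
    proof (intro allI impI)
      fix j assume j: "j < length (m#r)"
      show "(e#w) ! j \<in> alph ((m#r) ! j)"
      proof (cases j)
        case 0 then show ?thesis using H by simp
      next
        case (Suc i) then show ?thesis using H j by simp
      qed
    qed
  qed
  have B: "(\<forall>j. j + 1 < length (m#r) \<longrightarrow> arrow ((m#r) ! (j+1)) (fst ((e#w) ! j)) ((e#w) ! (j+1))) \<longleftrightarrow>
        arrow (r ! 0) (fst e) (w ! 0) \<and> (\<forall>j. j + 1 < length r \<longrightarrow> arrow (r ! (j+1)) (fst (w ! j)) (w ! (j+1)))"
  proof
    assume H: "\<forall>j. j + 1 < length (m#r) \<longrightarrow> arrow ((m#r) ! (j+1)) (fst ((e#w) ! j)) ((e#w) ! (j+1))"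
    have "arrow (r ! 0) (fst e) (w ! 0)" using spec[OF H, of 0] assms by simp
    moreover have "arrow (r ! (j+1)) (fst (w ! j)) (w ! (j+1))" if "j + 1 < length r" for j
      using spec[OF H, of "Suc j"] that by simp
    ultimately show "arrow (r ! 0) (fst e) (w ! 0) \<and> (\<forall>j. j + 1 < length r \<longrightarrow> arrow (r ! (j+1)) (fst (w ! j)) (w ! (j+1)))" by blast
  next
    assume H: "arrow (r ! 0) (fst e) (w ! 0) \<and> (\<forall>j. j + 1 < length r \<longrightarrow> arrow (r ! (j+1)) (fst (w ! j)) (w ! (j+1)))"
    show "\<forall>j. j + 1 < length (m#r) \<longrightarrow> arrow ((m#r) ! (j+1)) (fst ((e#w) ! j)) ((e#w) ! (j+1))"
    proof (intro allI impI)
      fix j assume j: "j + 1 < length (m#r)"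
      show "arrow ((m#r) ! (j+1)) (fst ((e#w) ! j)) ((e#w) ! (j+1))"
      proof (cases j)
        case 0 then show ?thesis using H by simp
      next
        case (Suc i) then show ?thesis using H j by simp
      qed
    qed
  qed
  show ?thesis
    unfolding Xi_iff[of "e#w"] Xi_iff[of w] A B S_def
    by auto
qed


lemma Xi_Nil_not: "[] \<notin> Xi t (m#r)"
  unfolding Xi_iff by simp

lemma Xi_cons:
  assumes "r \<noteq> []"
  shows "w \<in> Xi t (m#r) \<longleftrightarrow> (\<exists>e w'. w = e#w' \<and> e \<in> S t m \<and> w' \<in> Xi (fst e) r)"
proof (cases w)
  case Nil then show ?thesis using Xi_Nil_not by simp
next
  case (Cons e w') then show ?thesis using Xi_cons_iff[OF assms] by simp
qed

lemma Xi_single: "w \<in> Xi t [m] \<longleftrightarrow> (\<exists>e. w = [e] \<and> e \<in> S t m)"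
proof
  assume "w \<in> Xi t [m]"
  then have "length w = 1" "w ! 0 \<in> alph m" "arrow m t (w ! 0)" unfolding Xi_iff by auto
  then show "\<exists>e. w = [e] \<and> e \<in> S t m" unfolding S_def
    by (cases w) auto
next
  assume "\<exists>e. w = [e] \<and> e \<in> S t m"
  then show "w \<in> Xi t [m]" unfolding Xi_iff S_def by auto
qed

lemma S_T1: "S T1 m = {(T2,1)}"
  by (auto simp: S_def alph_def)
lemma S_T2: "S T2 m = Pair T1 ` {1..m+1} \<union> Pair T3 ` {1..m}"
  by (auto simp: S_def alph_def)
lemma S_T3: "S T3 m = Pair T1 ` {1..m} \<union> Pair T3 ` {1..m-1}"
  by (auto simp: S_def alph_def)

lemma finite_S: "finite (S t m)"
  by (cases t) (auto simp: S_T1 S_T2 S_T3)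


definition c :: "ltype \<Rightarrow> ltype \<Rightarrow> nat \<Rightarrow> int" where
  "c t s m = (case (t, s) of (T1, T2) \<Rightarrow> 1 | (T2, T1) \<Rightarrow> int m + 1 | (T2, T3) \<Rightarrow> int m
     | (T3, T1) \<Rightarrow> int m | (T3, T3) \<Rightarrow> int (m - 1) | _ \<Rightarrow> 0)"

lemma sum_Pair: "(\<Sum>e\<in>Pair x ` A. g (fst e)) = (\<Sum>e\<in>A. g x)"
  by (subst sum.reindex) (auto simp: inj_on_def)

lemma sum_S: "(\<Sum>e\<in>S t m. g (fst e)) = c t T1 m * g T1 + c t T2 m * g T2 + c t T3 m * g T3"
proof (cases t)
  case T1 then show ?thesis by (simp add: S_T1 c_def)
next
  case T2
  have "(\<Sum>e\<in>S t m. g (fst e)) = (\<Sum>e\<in>Pair T1 ` {1..m+1}. g (fst e)) + (\<Sum>e\<in>Pair T3 ` {1..m}. g (fst e))"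
    unfolding T2 S_T2 by (rule sum.union_disjoint) auto
  also have "\<dots> = c t T1 m * g T1 + c t T2 m * g T2 + c t T3 m * g T3"
    by (simp add: sum_Pair T2 c_def algebra_simps)
  finally show ?thesis .
next
  case T3
  have "(\<Sum>e\<in>S t m. g (fst e)) = (\<Sum>e\<in>Pair T1 ` {1..m}. g (fst e)) + (\<Sum>e\<in>Pair T3 ` {1..m-1}. g (fst e))"
    unfolding T3 S_T3 by (rule sum.union_disjoint) auto
  also have "\<dots> = c t T1 m * g T1 + c t T2 m * g T2 + c t T3 m * g T3"
    by (simp add: sum_Pair T3 c_def algebra_simps)
  finally show ?thesis .
qed

fun E :: "ltype \<Rightarrow> nat list \<Rightarrow> ltype \<Rightarrow> int" where
  "E t [] t' = (if t = t' then 1 else 0)"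
| "E t (m#r) t' = c t T1 m * E T1 r t' + c t T2 m * E T2 r t' + c t T3 m * E T3 r t'"

lemma Xi_end_iff: "w \<in> Xi_end t a t' \<longleftrightarrow> w \<in> Xi t a \<and> fst (w ! (length a - 1)) = t'"
  unfolding Xi_end_def by (rule mem_Collect_eq)

lemma Xi_end_cons:
  assumes "r \<noteq> []"
  shows "Xi_end t (m#r) t' = (\<lambda>(e,w). e#w) ` (SIGMA e:S t m. Xi_end (fst e) r t')"
proof (rule set_eqI)
  fix w
  have lr: "length r > 0" using assms by simp
  have idx: "(e#w') ! (length (m#r) - 1) = w' ! (length r - 1)" for e :: letter and w'
    using lr by (cases "length r") auto
  show "w \<in> Xi_end t (m#r) t' \<longleftrightarrow> w \<in> (\<lambda>(e,w). e#w) ` (SIGMA e:S t m. Xi_end (fst e) r t')"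
  proof
    assume "w \<in> Xi_end t (m#r) t'"
    then have h1: "w \<in> Xi t (m#r)" and h2: "fst (w ! (length (m#r) - 1)) = t'"
      unfolding Xi_end_iff by blast+
    from h1 obtain e w' where w: "w = e#w'" and e: "e \<in> S t m" and w': "w' \<in> Xi (fst e) r"
      unfolding Xi_cons[OF assms] by blast
    have "fst (w' ! (length r - 1)) = t'" using h2 unfolding w idx .
    then have "w' \<in> Xi_end (fst e) r t'" using w' unfolding Xi_end_iff by blast
    then have "(e, w') \<in> (SIGMA e:S t m. Xi_end (fst e) r t')" using e by (rule SigmaI[rotated])
    moreover have "w = (\<lambda>(e,w). e#w) (e, w')" using w by simp
    ultimately show "w \<in> (\<lambda>(e,w). e#w) ` (SIGMA e:S t m. Xi_end (fst e) r t')" by (rule rev_image_eqI)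
  next
    assume "w \<in> (\<lambda>(e,w). e#w) ` (SIGMA e:S t m. Xi_end (fst e) r t')"
    then obtain p where p: "p \<in> (SIGMA e:S t m. Xi_end (fst e) r t')" "w = (\<lambda>(e,w). e#w) p"
      by (rule imageE)
    obtain e w' where pe: "p = (e, w')" by (cases p)
    have w: "w = e#w'" and e: "e \<in> S t m" and w': "w' \<in> Xi_end (fst e) r t'"
      using p unfolding pe by simp_all
    have a: "w' \<in> Xi (fst e) r" and b: "fst (w' ! (length r - 1)) = t'" using w' unfolding Xi_end_iff by blast+
    have "w \<in> Xi t (m#r)" unfolding Xi_cons[OF assms] using w e a by blast
    moreover have "fst (w ! (length (m#r) - 1)) = t'" unfolding w idx by (rule b)
    ultimately show "w \<in> Xi_end t (m#r) t'" unfolding Xi_end_iff by blast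
  qed
qed

lemma Xi_end_single: "Xi_end t [m] t' = (\<lambda>e. [e]) ` {e \<in> S t m. fst e = t'}"
proof (rule set_eqI)
  fix w
  show "w \<in> Xi_end t [m] t' \<longleftrightarrow> w \<in> (\<lambda>e. [e]) ` {e \<in> S t m. fst e = t'}"
    unfolding Xi_end_iff Xi_single by auto
qed


lemma card_Xi_end:
  "a \<noteq> [] \<Longrightarrow> finite (Xi_end t a t') \<and> int (card (Xi_end t a t')) = E t a t'"
proof (induction a arbitrary: t)
  case Nil then show ?case by simp
next
  case (Cons m r)
  show ?case
  proof (cases "r = []")
    case True
    have fS: "finite {e \<in> S t m. fst e = t'}" using finite_S[of t m] by simp
    have "int (card {e \<in> S t m. fst e = t'}) = (\<Sum>e\<in>{e \<in> S t m. fst e = t'}. 1)" by simp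
    also have "\<dots> = (\<Sum>e\<in>S t m. (\<lambda>s. if s = t' then 1 else 0) (fst e))"
      by (rule sum.inter_filter[OF finite_S, where g="\<lambda>_. 1" and P="\<lambda>e. fst e = t'"])
    also have "\<dots> = c t T1 m * (if T1 = t' then 1 else 0) + c t T2 m * (if T2 = t' then 1 else 0) + c t T3 m * (if T3 = t' then 1 else 0)"
      by (rule sum_S)
    also have "\<dots> = E t [m] t'" by simp
    finally have "int (card {e \<in> S t m. fst e = t'}) = E t [m] t'" .
    moreover have "inj_on (\<lambda>e. [e]) {e \<in> S t m. fst e = t'}" by (simp add: inj_on_def)
    ultimately show ?thesis unfolding True Xi_end_single
      using fS by (simp add: card_image)
  next
    case False
    have IH: "finite (Xi_end s r t')" "int (card (Xi_end s r t')) = E s r t'" for s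
      using Cons.IH[OF False, of s] by blast+
    have fin: "finite (SIGMA e:S t m. Xi_end (fst e) r t')"
      using IH(1) finite_S by (intro finite_SigmaI) 
    have inj: "inj_on (\<lambda>(e,w). e#w) (SIGMA e:S t m. Xi_end (fst e) r t')"
      by (simp add: inj_on_def)
    have "card (SIGMA e:S t m. Xi_end (fst e) r t') = (\<Sum>e\<in>S t m. card (Xi_end (fst e) r t'))"
      using IH(1) finite_S by (intro card_SigmaI) auto
    then have "int (card (SIGMA e:S t m. Xi_end (fst e) r t')) = (\<Sum>e\<in>S t m. int (card (Xi_end (fst e) r t')))"
      by simp
    also have "\<dots> = (\<Sum>e\<in>S t m. E (fst e) r t')"
      using IH(2) by simp
    also have "\<dots> = c t T1 m * E T1 r t' + c t T2 m * E T2 r t' + c t T3 m * E T3 r t'"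
      by (rule sum_S)
    also have "\<dots> = E t (m#r) t'" by simp
    finally show ?thesis unfolding Xi_end_cons[OF False]
      using fin inj by (simp add: card_image)
  qed
qed

lemma Xi_split: "Xi t a = Xi_end t a T1 \<union> Xi_end t a T2 \<union> Xi_end t a T3"
proof -
  have "x = T1 \<or> x = T2 \<or> x = T3" for x by (cases x) auto
  then show ?thesis unfolding Xi_end_def by blast
qed

lemma card_Xi: "a \<noteq> [] \<Longrightarrow> int (card (Xi t a)) = E t a T1 + E t a T2 + E t a T3"
proof -
  assume a: "a \<noteq> []"
  have f: "finite (Xi_end t a s)" "int (card (Xi_end t a s)) = E t a s" for s
    using card_Xi_end[OF a] by blast+
  have d: "Xi_end t a s \<inter> Xi_end t a s' = {}" if "s \<noteq> s'" for s s'
    using that unfolding Xi_end_def by blast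
  have "card (Xi t a) = card (Xi_end t a T1 \<union> Xi_end t a T2) + card (Xi_end t a T3)"
    unfolding Xi_split using f d[of T1 T3] d[of T2 T3] by (intro card_Un_disjoint) auto
  also have "card (Xi_end t a T1 \<union> Xi_end t a T2) = card (Xi_end t a T1) + card (Xi_end t a T2)"
    using f d[of T1 T2] by (intro card_Un_disjoint) auto
  finally show ?thesis using f by simp
qed

fun K :: "nat list \<Rightarrow> int" where
  "K [] = 1"
| "K [x] = int x"
| "K (x#y#r) = int x * K (y#r) + K r"

definition L :: "nat list \<Rightarrow> int" where
  "L a = (case a of [] \<Rightarrow> 0 | _ # r \<Rightarrow> K r)"

lemma K_cons: "K (x#r) = int x * K r + L r"
  by (cases r) (auto simp: L_def)

lemma L_cons[simp]: "L (x#r) = K r"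
  by (simp add: L_def)
lemma L_Nil[simp]: "L [] = 0"
  by (simp add: L_def)

lemma foldl_K:
  "int (snd (foldl (\<lambda>(p, q) x. (q, x * q + p)) (p, q) a)) = int q * K a + int p * L a"
proof (induction a arbitrary: p q)
  case Nil then show ?case by simp
next
  case (Cons x xs)
  show ?case using Cons.IH[of q "x*q+p"] by (simp add: K_cons algebra_simps)
qed

lemma qn_K: "int (qn a) = K a"
  unfolding qn_def using foldl_K[of 0 1 a] by simp

lemma K_pos: "\<forall>x\<in>set a. x \<ge> 1 \<Longrightarrow> K a \<ge> 1"
proof (induction a rule: K.induct)
  case (3 x y r)
  have p: "\<forall>z\<in>set (y#r). 1 \<le> z" "\<forall>z\<in>set r. 1 \<le> z" "1 \<le> x"
    using "3.prems" by simp_all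
  have "K (y#r) \<ge> 1" "K r \<ge> 1" "int x \<ge> 1"
    using "3.IH"(1)[OF p(1)] "3.IH"(2)[OF p(2)] p(3) by simp_all
  then have "int x * K (y#r) \<ge> 1 * 1" by (intro mult_mono) auto
  then show ?case using \<open>K r \<ge> 1\<close> by simp
next
  case 1 then show ?case by simp
next
  case (2 x) then show ?case by simp
qed

lemma generic:
  fixes G :: "ltype \<Rightarrow> nat list \<Rightarrow> int"
  assumes rec: "\<And>t m r. G t (m#r) = c t T1 m * G T1 r + c t T2 m * G T2 r + c t T3 m * G T3 r"
    and pos: "\<forall>x\<in>set a. x \<ge> 1" and G23: "G T2 [] = G T3 []"
  shows "G T1 a + G T3 a = (G T1 [] + G T3 []) * K a
       \<and> G T2 a = (G T1 [] + G T3 []) * K a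
                  - (G T1 [] - G T2 [] + G T3 []) * (-1) ^ length a"
  using pos
proof (induction a rule: K.induct)
  case 1 then show ?case by simp
next
  case (2 x)
  then have x: "int (x - 1) = int x - 1" "int (x - Suc 0) = int x - 1" by auto
  show ?case using G23 by (simp add: rec c_def x algebra_simps)
next
  case (3 x y r)
  then have x: "int (x - 1) = int x - 1" "int (x - Suc 0) = int x - 1" by auto
  have IH1: "G T1 (y#r) + G T3 (y#r) = (G T1 [] + G T3 []) * K (y#r)"
    "G T2 (y#r) = (G T1 [] + G T3 []) * K (y#r)
                  - (G T1 [] - G T2 [] + G T3 []) * (-1) ^ length (y#r)"
    using 3 by auto
  have IH2: "G T2 r = (G T1 [] + G T3 []) * K r
                  - (G T1 [] - G T2 [] + G T3 []) * (-1) ^ length r"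
    using 3 by auto
  have g1: "G T1 (y#r) = G T2 r" by (simp add: rec c_def)
  have e1: "G T1 (x#y#r) = G T2 (y#r)" by (simp add: rec c_def)
  have e2: "G T2 (x#y#r) = (int x + 1) * G T1 (y#r) + int x * G T3 (y#r)" by (simp add: rec c_def)
  have e3: "G T3 (x#y#r) = int x * G T1 (y#r) + (int x - 1) * G T3 (y#r)" by (simp add: rec c_def x)
  have k: "K (x#y#r) = int x * K (y#r) + K r" "L (x#y#r) = K (y#r)" "L (y#r) = K r" by simp_all
  have G3: "G T3 (y#r) = (G T1 [] + G T3 []) * K (y#r) - G T2 r"
    using IH1(1) g1 by simp
  show ?case
    unfolding e1 e2 e3 k G3 g1 IH1(2) IH2
    using G23 by (simp add: k K_cons[of y r] algebra_simps)
qed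


lemma L_le_K: "\<forall>x\<in>set a. x \<ge> 1 \<Longrightarrow> 0 \<le> L a \<and> L a \<le> K a"
proof (cases a)
  case Nil then show ?thesis by simp
next
  case (Cons x r)
  assume p: "\<forall>x\<in>set a. x \<ge> 1"
  then have r: "\<forall>x\<in>set r. x \<ge> 1" and x: "int x \<ge> 1" using Cons by auto
  have Kr: "K r \<ge> 1" using K_pos[OF r] .
  have Lr: "L r \<ge> 0" using K_pos[of "tl r"] r by (cases r) auto
  have "K r \<le> int x * K r" using x Kr by simp
  moreover have "L a = K r" "K a = int x * K r + L r" using Cons K_cons[of x r] by simp_all
  ultimately show ?thesis using Kr Lr by linarith
qed

definition N :: "ltype \<Rightarrow> nat list \<Rightarrow> int" where
  "N t a = E t a T1 + E t a T2 + E t a T3"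

lemma N_rec: "N t (m#r) = c t T1 m * N T1 r + c t T2 m * N T2 r + c t T3 m * N T3 r"
  unfolding N_def by (simp add: algebra_simps)

lemma N_facts:
  assumes "\<forall>x\<in>set a. x \<ge> 1"
  shows "N T1 a + N T3 a = 2 * K a \<and> N T2 a = 2 * K a - (-1) ^ length a"
  using generic[where G=N, OF N_rec assms] by (simp add: N_def)

lemma E1_facts:
  assumes "\<forall>x\<in>set a. x \<ge> 1"
  shows "E T1 a T1 + E T3 a T1 = K a \<and> E T2 a T1 = K a - (-1) ^ length a"
  using generic[where G="\<lambda>t a. E t a T1", OF _ assms] by simp

lemma N1_cons: "N T1 (m#r) = N T2 r"
  by (simp add: N_rec c_def)
lemma E1_cons: "E T1 (m#r) t' = E T2 r t'"
  by (simp add: c_def)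

lemma sim3I: "(Y::real) \<le> 3 * X \<Longrightarrow> X \<le> 3 * Y \<Longrightarrow> sim 3 X Y"
  by (simp add: sim_def)

lemma sim3_div: "(d::real) > 0 \<Longrightarrow> Y \<le> 3 * d * X \<Longrightarrow> d * X \<le> 3 * Y \<Longrightarrow> sim 3 X (Y / d)"
  by (simp add: sim_def field_simps)

lemma sim3_int: assumes "Y \<le> 3*X" "X \<le> 3*Y"
  shows "sim 3 (real_of_int X) (real_of_int Y)"
proof -
  have "real_of_int Y \<le> real_of_int (3*X)" "real_of_int X \<le> real_of_int (3*Y)"
    using assms by (simp_all only: of_int_le_iff)
  then show ?thesis by (intro sim3I) simp_all
qed

lemma sim3_div_int: assumes "d > 0" "Y \<le> 3*d*X" "d*X \<le> 3*Y"
  shows "sim 3 (real_of_int X) (real_of_int Y / real_of_int d)"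
proof -
  have "real_of_int Y \<le> real_of_int (3*d*X)" "real_of_int (d*X) \<le> real_of_int (3*Y)"
    using assms by (simp_all only: of_int_le_iff)
  then show ?thesis using assms(1) by (intro sim3_div) simp_all
qed

lemma main:
  fixes a :: "nat list"
  assumes len: "length a \<ge> 3" and pos: "\<forall>x \<in> set a. x \<ge> 1"
  shows "sim 3 (card (Xi T1 a)) (qn a / a ! 0)
   \<and> sim 3 (card (Xi T2 a)) (qn a)
   \<and> (a ! 0 \<ge> 2 \<longrightarrow> sim 3 (card (Xi T3 a)) (qn a))
   \<and> (a ! 0 = 1 \<longrightarrow> sim 3 (card (Xi T3 a)) (qn a / a ! 1))
   \<and> (\<forall>t. sim 3 (real (card (Xi_end t a T2)) + real (card (Xi_end t a T3))) (card (Xi t a)))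
   \<and> sim 3 (card (Xi_end T2 a T1)) (qn a)"
proof -
  obtain m n s where a: "a = m#n#s" and s: "s \<noteq> []"
    using len by (cases a; cases "tl a"; cases "tl (tl a)") auto
  have ne: "a \<noteq> []" using a by simp
  have posns: "\<forall>x\<in>set (n#s). x \<ge> 1" and poss: "\<forall>x\<in>set s. x \<ge> 1"
    and m1: "int m \<ge> 1" and n1: "int n \<ge> 1" using pos a by auto
  define A where "A = K (n#s)"
  define B where "B = K s"
  define D where "D = L s"
  define Q where "Q = K a"
  define \<epsilon> where "\<epsilon> = ((-1::int) ^ length a)"
  have eps: "\<epsilon> = 1 \<or> \<epsilon> = -1" unfolding \<epsilon>_def by (cases "even (length a)") simp_all
  have epsn: "(-1::int) ^ length (n#s) = - \<epsilon>" unfolding \<epsilon>_def a by simp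
  have QA: "Q = int m * A + B" unfolding Q_def A_def B_def a by simp
  have AB: "A = int n * B + D" unfolding A_def B_def D_def by (rule K_cons)
  have B1: "B \<ge> 1" unfolding B_def using K_pos[OF poss] .
  have D1: "D \<ge> 1" unfolding D_def using s K_pos[of "tl s"] poss by (cases s) auto
  have DB: "D \<le> B" unfolding D_def B_def using L_le_K[OF poss] by simp
  have nB: "B \<le> int n * B" using n1 B1 by simp
  have A1: "A \<ge> B" using AB nB D1 by simp
  have mA: "A \<le> int m * A" using m1 A1 B1 by simp
  have Q2: "Q \<ge> 2" using QA mA A1 B1 by linarith
  have qn: "real (qn a) = of_int Q" unfolding Q_def by (metis qn_K of_int_of_nat_eq)
  have cXi: "real (card (Xi t a)) = of_int (N t a)" for t
    using card_Xi[OF ne, of t] unfolding N_def by (metis of_int_of_nat_eq)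
  have cXe: "real (card (Xi_end t a t')) = of_int (E t a t')" for t t'
    using card_Xi_end[OF ne, of t t'] by (metis of_int_of_nat_eq)
  have Nf: "N T1 a + N T3 a = 2 * Q" "N T2 a = 2 * Q - \<epsilon>"
    using N_facts[OF pos] unfolding Q_def \<epsilon>_def by auto
  have N1: "N T1 a = 2 * A + \<epsilon>"
    using N_facts[OF posns] epsn unfolding a N1_cons A_def by simp
  have Ef: "E T1 a T1 + E T3 a T1 = Q" "E T2 a T1 = Q - \<epsilon>"
    using E1_facts[OF pos] unfolding Q_def \<epsilon>_def by auto
  have E1: "E T1 a T1 = A + \<epsilon>"
    using E1_facts[OF posns] epsn unfolding a E1_cons A_def by simp
  have sumE: "E t a T2 + E t a T3 = N t a - E t a T1" for t unfolding N_def by simp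
  have a0: "a ! 0 = m" "a ! 1 = n" using a by auto
  have epsb: "-1 \<le> \<epsilon>" "\<epsilon> \<le> 1" using eps by auto
  have i1: "sim 3 (card (Xi T1 a)) (qn a / a ! 0)"
  proof -
    have "Q \<le> 3 * int m * N T1 a"
    proof -
      have "Q \<le> 2 * (int m * A)" using QA mA A1 by linarith
      also have "\<dots> \<le> 3 * (int m * N T1 a)"
      proof -
        have "2*A \<le> 3*N T1 a" using N1 eps A1 B1 by auto
        then have "int m*(2*A) \<le> int m*(3*N T1 a)" using m1 by (intro mult_left_mono) auto
        then show ?thesis by (simp add: algebra_simps)
      qed
      finally show ?thesis by simp
    qed
    moreover have "int m * N T1 a \<le> 3 * Q"
    proof -
      have "int m * N T1 a \<le> int m * (3 * A)" using N1 eps m1 A1 B1 by (intro mult_left_mono) auto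
      then show ?thesis using QA B1 by simp
    qed
    moreover have "real m = real_of_int (int m)" by simp
    ultimately show ?thesis unfolding cXi qn a0 using m1
      by (metis sim3_div_int zero_less_one_class.zero_le_one order_less_le_trans zero_less_one)
  qed


    have i2: "sim 3 (card (Xi T2 a)) (qn a)"
      unfolding cXi qn by (rule sim3_int) (use Nf eps Q2 in auto)
    have i3: "a ! 0 \<ge> 2 \<longrightarrow> sim 3 (card (Xi T3 a)) (qn a)"
    proof
    assume "a ! 0 \<ge> 2"
    then have "int m \<ge> 2" using a0 by simp
    then have mm: "2 * A \<le> int m * A" using A1 B1 by (intro mult_right_mono) auto
    have "Q \<le> 3 * N T3 a" "N T3 a \<le> 3 * Q" using mm Nf N1 epsb QA A1 B1 by linarith+
    then show "sim 3 (card (Xi T3 a)) (qn a)"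
      unfolding cXi qn by (rule sim3_int)
    qed
    have i4: "a ! 0 = 1 \<longrightarrow> sim 3 (card (Xi T3 a)) (qn a / a ! 1)"
    proof
    assume "a ! 0 = 1"
    then have m: "int m = 1" using a0 by simp
    have X: "N T3 a = 2 * B - \<epsilon>" using Nf N1 QA m by simp
    have f1: "int n * B \<le> int n * N T3 a" using X eps n1 B1 by (intro mult_left_mono) auto
    have "N T3 a \<le> 3 * B" using X eps B1 by auto
    then have "int n * N T3 a \<le> int n * (3 * B)" using n1 by (intro mult_left_mono) auto
    also have "\<dots> = 3 * (int n * B)" by simp
    finally have f2: "int n * N T3 a \<le> 3 * (int n * B)" .
    have QAB: "Q = A + B" using QA m by simp
    have "Q \<le> 3 * int n * N T3 a" "int n * N T3 a \<le> 3 * Q"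
      using f1 f2 QAB AB nB DB D1 by linarith+
    moreover have "real n = real_of_int (int n)" by simp
    ultimately show "sim 3 (card (Xi T3 a)) (qn a / a ! 1)"
      unfolding cXi qn a0 using n1
      by (metis sim3_div_int order_less_le_trans zero_less_one)
    qed
    have i5: "\<forall>t. sim 3 (real (card (Xi_end t a T2)) + real (card (Xi_end t a T3))) (card (Xi t a))"
    proof
    fix t
    have r: "real (card (Xi_end t a T2)) + real (card (Xi_end t a T3)) = of_int (N t a - E t a T1)"
      unfolding cXe sumE[symmetric] by simp
    show "sim 3 (real (card (Xi_end t a T2)) + real (card (Xi_end t a T3))) (card (Xi t a))"
      unfolding r cXi
    proof (rule sim3_int)
      note F = Nf N1 Ef E1 epsb QA mA A1 B1
      have h1: "N T1 a \<le> 3 * (N T1 a - E T1 a T1)" using F by (simp only: algebra_simps; linarith)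
      have h2: "N T2 a \<le> 3 * (N T2 a - E T2 a T1)" using F by (simp only: algebra_simps; linarith)
      have h3: "N T3 a \<le> 3 * (N T3 a - E T3 a T1)" using F by (simp only: algebra_simps; linarith)
      have h4: "N T1 a - E T1 a T1 \<le> 3 * N T1 a" using F by (simp only: algebra_simps; linarith)
      have h5: "N T2 a - E T2 a T1 \<le> 3 * N T2 a" using F by (simp only: algebra_simps; linarith)
      have h6: "N T3 a - E T3 a T1 \<le> 3 * N T3 a" using F by (simp only: algebra_simps; linarith)
      note h = h1 h2 h3 h4 h5 h6
      show "N t a \<le> 3 * (N t a - E t a T1)" using h by (cases t) simp_all
      show "N t a - E t a T1 \<le> 3 * N t a" using h by (cases t) simp_all
    qed
    qed
    have i6: "sim 3 (card (Xi_end T2 a T1)) (qn a)"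
      unfolding cXe qn by (rule sim3_int) (use Ef eps Q2 in auto)
  
  show ?thesis using i1 i2 i3 i4 i5 i6 by blast
qed

theorem lemma4p5:
  shows "\<exists>C::real. C \<ge> 1 \<and> (\<forall>a::nat list. length a \<ge> 3 \<longrightarrow> (\<forall>x \<in> set a. x \<ge> 1) \<longrightarrow>
     sim C (card (Xi T1 a)) (qn a / a ! 0)
   \<and> sim C (card (Xi T2 a)) (qn a)
   \<and> (a ! 0 \<ge> 2 \<longrightarrow> sim C (card (Xi T3 a)) (qn a))
   \<and> (a ! 0 = 1 \<longrightarrow> sim C (card (Xi T3 a)) (qn a / a ! 1))
   \<and> (\<forall>t. sim C (real (card (Xi_end t a T2)) + real (card (Xi_end t a T3))) (card (Xi t a)))
   \<and> sim C (card (Xi_end T2 a T1)) (qn a))"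
  using main by (intro exI[of _ 3]) auto

end
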